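(* For any $n\in\mathbb{N}$, $d\in\mathbb{N}_0$, $c_1,\ldots,c_d\in\mathbb{N}\setminus\{2\}$ and $a_0,\ldots,a_d\in\mathbb{N}_0$, with $c_0=1$, $c_{d+1}=0$, $\delta_i=\delta(c_i)+\delta(c_{i+1})$, $k_{-1}=0$, $$t^{\star}_n(\{2\}^{a_0},c_1,\{2\}^{a_1},\ldots,c_d,\{2\}^{a_d})=\frac{n\binom{2n}{n}}{2^{4n-2}}\sum_{n\geq k_0\geq\cdots\geq k_d\geq1}\binom{2n-1}{n-k_0}\prod_{i=0}^{d}\frac{(-1)^{k_i\delta_i}}{(2k_i-1)^{2a_i-\delta_i+3}}V_{k_{i-1},k_i}^{\#}(\{1\}^{c_i-3}).$$
   Context: $t^{\star}_n(\boldsymbol{s})=\sum_{n\geq k_1\geq\cdots\geq k_r\geq1}\prod_{j=1}^r(2k_j-1)^{-s_j}$ for an index $\boldsymbol{s}=(s_1,\ldots,s_r)$, $t^\star_n(\emptyset)=1$. $\{s\}^a$ denotes $s$ repeated $a$ times; for $a\le 0$, $\{1\}^{a}$ is the empty index. $\triangle(k,m)=0$ if $k=m$, $1$ otherwise. For an index $\boldsymbol{s}=(s_1,\ldots,s_r)$ and $k,m\in\mathbb{N}_0$: if $\boldsymbol{s}\ne\emptyset$ and $k\ge m$, $V^{\#}_{k,m}(\boldsymbol{s})=\frac{2k-1}{2m-1}\sum_{k\geq l_1\geq\cdots\geq l_r\geq m}\frac{2^{\triangle(k,l_1)+\triangle(l_1,l_2)+\cdots+\triangle(l_r,m)}}{(2l_1-1)^{s_1}\cdots(2l_r-1)^{s_r}}$;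 otherwise $V^{\#}_{k,m}(\boldsymbol{s})=\left(2\cdot\frac{2k-1}{2m-1}\right)^{\triangle(k,m)}$. $\delta(0)=2$, $\delta(1)=1$, $\delta(c)=0$ for $c\ge3$. *)

theory Defs
  imports Complex_Main
begin

text \<open>Odd number 2k-1 as a real (for k = 0 this is -1).\<close>
definition odd_r :: "nat \<Rightarrow> real" where
  "odd_r k = 2 * real k - 1"

fun tstar :: "nat \<Rightarrow> nat list \<Rightarrow> real" where
  "tstar n [] = 1"
| "tstar n (s # ss) = (\<Sum>k\<in>{1..n}. tstar k ss / odd_r k ^ s)"

definition tri :: "nat \<Rightarrow> nat \<Rightarrow> nat" where
  "tri k m = (if k = m then 0 else 1)"

text \<open>Wsum k m s = sum over k >= l_1 >= ... >= l_r >= m of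
  2^(tri k l_1 + tri l_1 l_2 + ... + tri l_r m) / prod (2 l_j - 1)^(s_j).\<close>
fun Wsum :: "nat \<Rightarrow> nat \<Rightarrow> nat list \<Rightarrow> real" where
  "Wsum k m [] = 2 ^ tri k m"
| "Wsum k m (s # ss) = (\<Sum>l\<in>{m..k}. 2 ^ tri k l / odd_r l ^ s * Wsum l m ss)"

definition Vsharp :: "nat \<Rightarrow> nat \<Rightarrow> nat list \<Rightarrow> real" where
  "Vsharp k m s =
     (if s \<noteq> [] \<and> k \<ge> m then odd_r k / odd_r m * Wsum k m s
      else (2 * (odd_r k / odd_r m)) ^ tri k m)"

text \<open>delta(0)=2, delta(1)=1, delta(c)=0 for c >= 3 (value at 2 is never used).\<close>
definition delta :: "nat \<Rightarrow> nat" where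
  "delta c = (if c = 0 then 2 else if c = 1 then 1 else 0)"

text \<open>The index {2}^{a_0}, c_1, {2}^{a_1}, ..., c_d, {2}^{a_d}.\<close>
definition mix_index :: "nat \<Rightarrow> (nat \<Rightarrow> nat) \<Rightarrow> (nat \<Rightarrow> nat) \<Rightarrow> nat list" where
  "mix_index d c a = replicate (a 0) 2 @ concat (map (\<lambda>i. c i # replicate (a i) 2) [1..<d+1])"

definition cext :: "nat \<Rightarrow> (nat \<Rightarrow> nat) \<Rightarrow> nat \<Rightarrow> nat" where
  "cext d c i = (if i = 0 then 1 else if i = d + 1 then 0 else c i)"

definition deltai :: "nat \<Rightarrow> (nat \<Rightarrow> nat) \<Rightarrow> nat \<Rightarrow> nat" where
  "deltai d c i = delta (cext d c i) + delta (cext d c (i + 1))"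

definition chains :: "nat \<Rightarrow> nat \<Rightarrow> nat list set" where
  "chains n d = {ks. length ks = d + 1 \<and> sorted_wrt (\<ge>) ks \<and> set ks \<subseteq> {1..n}}"

end

theory Submission
  imports Defs
begin


definition Bn :: "nat \<Rightarrow> real" where
  "Bn n = real n * real (2*n choose n) / 2^(4*n-2)"

definition P :: "nat \<Rightarrow> nat \<Rightarrow> real" where
  "P n k = (if 1 \<le> k \<and> k \<le> n then Bn n * real (2*n-1 choose (n-k)) else 0)"

lemma odd_r_pos: "k \<ge> 1 \<Longrightarrow> odd_r k > 0"
  by (simp add: odd_r_def)

lemma odd_r_nz: "k \<ge> 1 \<Longrightarrow> odd_r k \<noteq> 0"
  by (simp add: odd_r_def)

declare binomial_Suc_Suc[simp del]

lemma F1: "(m+1) * (2*m+2 choose (m+1)) = 2*(2*m+1) * (2*m choose m)"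
proof -
  define X where "X = (2*m+1 choose m)"
  define Y where "Y = (2*m choose m)"
  have a: "(m+1) * (2*m+2 choose (m+1)) = (2*m+2) * X"
    using Suc_times_binomial[of m "2*m+1"] by (simp add: X_def)
  have b: "(2*m+1) * Y = (2*m+1 choose (m+1)) * (m+1)"
    using Suc_times_binomial_eq[of "2*m" m] by (simp add: Y_def)
  have c: "(2*m+1 choose (m+1)) = X"
    using binomial_symmetric[of m "2*m+1"] by (simp add: X_def)
  have "(2*m+2) * X = 2 * (X * (m+1))" by (simp add: algebra_simps)
  also have "\<dots> = 2*(2*m+1) * Y" using b c by simp
  finally show ?thesis using a by (simp add: Y_def)
qed

lemma F2: "1 \<le> j \<Longrightarrow> j \<le> m \<Longrightarrow> j * (2*m+1-j) * (2*m+1 choose j) = (2*m+1)*(2*m) * (2*m-1 choose (j-1))"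
proof -
  assume j: "1 \<le> j" "j \<le> m"
  define X where "X = (2*m choose (j-1))"
  define Y where "Y = (2*m-1 choose (j-1))"
  define r where "r = 2*m+1-j"
  have a: "j * (2*m+1 choose j) = (2*m+1) * X"
    using times_binomial_minus1_eq[of j "2*m+1"] j by (simp add: X_def)
  have b: "r * X = 2*m * Y"
  proof -
    have e: "2*m - (j-1) = r" using j by (simp add: r_def)
    show ?thesis using binomial_absorb_comp[of "2*m" "j-1"] unfolding e X_def Y_def by simp
  qed
  have "j * r * (2*m+1 choose j) = r * (j * (2*m+1 choose j))" by (simp add: algebra_simps)
  also have "\<dots> = (2*m+1) * (r * X)" using a by (simp add: algebra_simps)
  also have "\<dots> = (2*m+1)*(2*m) * Y" using b by (simp add: algebra_simps)
  finally show ?thesis by (simp add: r_def Y_def)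
qed

lemma R: assumes k: "1 \<le> k"
  shows "P (Suc m) k * (odd_r (Suc m)^2 - odd_r k^2) = odd_r (Suc m)^2 * P m k"
proof (cases "k \<le> m")
  case False
  then show ?thesis
    by (cases "k = Suc m") (auto simp: P_def)
next
  case True
  define j where "j = m + 1 - k"
  have j: "1 \<le> j" "j \<le> m" "m - k = j - 1" "Suc m - k = j" using True k by (auto simp: j_def)
  have m1: "m \<ge> 1" using True k by simp
  define C1 where "C1 = real (2*m+2 choose (m+1))"
  define C0 where "C0 = real (2*m choose m)"
  define D1 where "D1 = real (2*m+1 choose j)"
  define D0 where "D0 = real (2*m-1 choose (j-1))"
  have d: "odd_r (Suc m)^2 - odd_r k^2 = 4 * real j * real (2*m+1-j)"
    using True k by (simp add: odd_r_def j_def power2_eq_square of_nat_diff algebra_simps)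
  have f1: "(real m+1) * C1 = 2*(2*real m+1) * C0"
  proof -
    have "real ((m+1) * (2*m+2 choose (m+1))) = real (2*(2*m+1) * (2*m choose m))"
      using F1 by metis
    then show ?thesis unfolding C1_def C0_def by (simp only: of_nat_mult of_nat_add of_nat_1 of_nat_numeral)
  qed
  have f2: "real j * real (2*m+1-j) * D1 = (2*real m+1)*(2*real m) * D0"
  proof -
    have "real (j * (2*m+1-j) * (2*m+1 choose j)) = real ((2*m+1)*(2*m) * (2*m-1 choose (j-1)))"
      using F2[OF j(1,2)] by metis
    then show ?thesis unfolding D1_def D0_def by (simp only: of_nat_mult of_nat_add of_nat_1 of_nat_numeral)
  qed
  have pw: "(2::real)^(4*Suc m - 2) = 16 * 2^(4*m-2)"
  proof -
    have e: "4*Suc m - 2 = (4*m-2) + 4" using m1 by simp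
    have "(2::real)^((4*m-2)+4) = 2^(4*m-2) * 2^4" by (rule power_add)
    then show ?thesis using e by simp
  qed
  have PS: "P (Suc m) k = (real m+1) * C1 / 2^(4*Suc m - 2) * D1"
  proof -
    have e1: "2*Suc m - 1 = 2*m+1" "2*Suc m = 2*m+2" "real (Suc m) = real m + 1" by auto
    have "P (Suc m) k = Bn (Suc m) * real (2*Suc m - 1 choose (Suc m - k))"
      using True k unfolding P_def by simp
    also have "\<dots> = (real m+1) * C1 / 2^(4*Suc m - 2) * D1"
      unfolding Bn_def e1 j(4) C1_def D1_def by simp
    finally show ?thesis .
  qed
  have PM: "P m k = real m * C0 / 2^(4*m - 2) * D0"
    using True k j unfolding P_def Bn_def C0_def D0_def by simp
  have "P (Suc m) k * (odd_r (Suc m)^2 - odd_r k^2)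
     = ((real m+1) * C1) * (real j * real (2*m+1-j) * D1) * 4 / 2^(4*Suc m - 2)"
    unfolding PS d by (simp add: field_simps)
  also have "\<dots> = (2*(2*real m+1) * C0) * ((2*real m+1)*(2*real m) * D0) * 4 / (16 * 2^(4*m-2))"
    unfolding f1 f2 pw ..
  also have "\<dots> = odd_r (Suc m)^2 * P m k"
    unfolding PM by (simp add: odd_r_def field_simps power2_eq_square)
  finally show ?thesis .
qed



lemma P_zero: "k > n \<Longrightarrow> P n k = 0" "k = 0 \<Longrightarrow> P n k = 0"
  by (auto simp: P_def)

definition Tsum :: "nat \<Rightarrow> (nat \<Rightarrow> real) \<Rightarrow> real" where
  "Tsum n F = (\<Sum>j=1..n. P n j * F j)"

lemma Tsum_ext: "Tsum n F = (\<Sum>j=1..Suc n. P n j * F j)"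
  unfolding Tsum_def by (simp add: sum.cl_ivl_Suc P_zero)

lemma Tsum_0: "Tsum 0 F = 0" by (simp add: Tsum_def)

lemma odd_sq_pos: "j \<ge> 1 \<Longrightarrow> odd_r j ^ 2 > 0" by (simp add: odd_r_def)

lemma Pdown: assumes "1 \<le> j"
  shows "P m j = P (Suc m) j * (1 - odd_r j^2/odd_r (Suc m)^2)"
proof -
  have nz: "odd_r (Suc m)^2 \<noteq> 0" using odd_r_nz[of "Suc m"] by simp
  from R[OF assms, of m] nz show ?thesis by (simp add: field_simps)
qed

lemma Diff: "Tsum (Suc n) F - Tsum n F = (\<Sum>j=1..Suc n. P (Suc n) j * F j * odd_r j^2) / odd_r (Suc n)^2"
proof -
  have nz: "odd_r (Suc n)^2 \<noteq> 0" using odd_r_nz[of "Suc n"] by simp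
  have "Tsum n F = (\<Sum>j=1..Suc n. P (Suc n) j * F j - P (Suc n) j * F j * odd_r j^2 / odd_r (Suc n)^2)"
    unfolding Tsum_ext by (rule sum.cong) (auto simp: Pdown[of _ n] algebra_simps)
  then have "Tsum (Suc n) F - Tsum n F = (\<Sum>j=1..Suc n. P (Suc n) j * F j) - (\<Sum>j=1..Suc n. P (Suc n) j * F j - P (Suc n) j * F j * odd_r j^2 / odd_r (Suc n)^2)"
    unfolding Tsum_def by simp
  also have "\<dots> = (\<Sum>j=1..Suc n. P (Suc n) j * F j * odd_r j^2 / odd_r (Suc n)^2)"
    by (simp add: sum_subtractf)
  also have "\<dots> = (\<Sum>j=1..Suc n. P (Suc n) j * F j * odd_r j^2) / odd_r (Suc n)^2"
    by (simp only: sum_divide_distrib)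
  finally show ?thesis .
qed

lemma Tsum_from_diff:
  assumes "\<And>n. h (Suc n) = (\<Sum>j=1..Suc n. P (Suc n) j * F j * odd_r j^2) / odd_r (Suc n)^2"
  shows "(\<Sum>m=1..n. h m) = Tsum n F"
proof (induction n)
  case 0 then show ?case by (simp add: Tsum_0)
next
  case (Suc n)
  have "(\<Sum>m=1..Suc n. h m) = Tsum n F + h (Suc n)" using Suc by (simp add: sum.cl_ivl_Suc)
  also have "\<dots> = Tsum (Suc n) F" using Diff[of n F] assms[of n] by simp
  finally show ?case .
qed

lemma binom_step: "(N - k) * (N choose k) = Suc k * (N choose Suc k)"
  using binomial_absorb_comp[of N k] times_binomial_minus1_eq[of "Suc k" N] by simp

lemma coef_binom:
  fixes n :: nat
  shows "\<forall>i. 1 \<le> i \<longrightarrow> i \<le> n \<longrightarrow> n - i = t \<longrightarrow>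
    real t * real (2*n-1 choose t) = (\<Sum>j=Suc i..n. odd_r j * real (2*n-1 choose (n-j)))"
proof (induction t)
  case 0 then show ?case by auto
next
  case (Suc t)
  show ?case
  proof (intro allI impI)
    fix i assume i: "1 \<le> i" "i \<le> n" "n - i = Suc t"
    have IH: "real t * real (2*n-1 choose t) = (\<Sum>j=Suc (Suc i)..n. odd_r j * real (2*n-1 choose (n-j)))"
      using Suc.IH i by auto
    have "(\<Sum>j=Suc i..n. odd_r j * real (2*n-1 choose (n-j)))
        = odd_r (Suc i) * real (2*n-1 choose (n - Suc i)) + (\<Sum>j=Suc (Suc i)..n. odd_r j * real (2*n-1 choose (n-j)))"
      using i by (subst sum.atLeast_Suc_atMost) auto
    also have "\<dots> = (odd_r (Suc i) + real t) * real (2*n-1 choose t)"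
    proof -
      have "n - Suc i = t" using i by simp
      then show ?thesis using IH by (simp add: algebra_simps)
    qed
    also have "odd_r (Suc i) + real t = real ((2*n-1) - t)"
      using i by (simp add: odd_r_def)
    also have "real ((2*n-1) - t) * real (2*n-1 choose t) = real (Suc t) * real (2*n-1 choose Suc t)"
    proof -
      have "real ((2*n-1-t) * (2*n-1 choose t)) = real (Suc t * (2*n-1 choose Suc t))"
        using binom_step by metis
      then show ?thesis by (simp only: of_nat_mult)
    qed
    finally show "real (Suc t) * real (2*n-1 choose Suc t) = (\<Sum>j=Suc i..n. odd_r j * real (2*n-1 choose (n-j)))" by (rule sym)
  qed
qed

lemma Coef: assumes "1 \<le> i" "i \<le> n"
  shows "(odd_r n - odd_r i) * P n i = 2 * (\<Sum>j=Suc i..n. odd_r j * P n j)"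
proof -
  have "(\<Sum>j=Suc i..n. odd_r j * P n j) = Bn n * (\<Sum>j=Suc i..n. odd_r j * real (2*n-1 choose (n-j)))"
    unfolding sum_distrib_left using assms by (intro sum.cong) (auto simp: P_def)
  also have "\<dots> = Bn n * (real (n-i) * real (2*n-1 choose (n-i)))"
    using coef_binom[of n "n-i"] assms by auto
  finally show ?thesis using assms by (simp add: P_def odd_r_def of_nat_diff)
qed



lemma swap_tri: "(\<Sum>j=1..n. \<Sum>i=1..<j. h i j) = (\<Sum>i=1..n. \<Sum>j=Suc i..n. (h i j :: real))"
proof (induction n)
  case 0 then show ?case by simp
next
  case (Suc n)
  have "(\<Sum>i=1..Suc n. \<Sum>j=Suc i..Suc n. h i j) = (\<Sum>i=1..n. \<Sum>j=Suc i..Suc n. h i j)"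
    by (simp add: sum.cl_ivl_Suc)
  also have "\<dots> = (\<Sum>i=1..n. (\<Sum>j=Suc i..n. h i j) + h i (Suc n))"
    by (intro sum.cong) (auto simp: sum.cl_ivl_Suc)
  also have "\<dots> = (\<Sum>i=1..n. \<Sum>j=Suc i..n. h i j) + (\<Sum>i=1..<Suc n. h i (Suc n))"
    by (simp add: sum.distrib atLeastLessThanSuc_atLeastAtMost)
  finally show ?case using Suc by (simp add: sum.cl_ivl_Suc)
qed

lemma MultL: "odd_r n * Tsum n g = (\<Sum>j=1..n. P n j * odd_r j * (g j + 2 * (\<Sum>i=1..<j. g i)))"
proof -
  have "(\<Sum>j=1..n. P n j * odd_r j * (g j + 2 * (\<Sum>i=1..<j. g i)))
      = (\<Sum>j=1..n. P n j * odd_r j * g j) + 2 * (\<Sum>j=1..n. \<Sum>i=1..<j. P n j * odd_r j * g i)"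
    by (simp add: sum.distrib sum_distrib_left algebra_simps)
  also have "(\<Sum>j=1..n. \<Sum>i=1..<j. P n j * odd_r j * g i) = (\<Sum>i=1..n. \<Sum>j=Suc i..n. P n j * odd_r j * g i)"
    by (rule swap_tri)
  also have "\<dots> = (\<Sum>i=1..n. g i * (\<Sum>j=Suc i..n. odd_r j * P n j))"
    by (simp add: sum_distrib_left algebra_simps)
  also have "\<dots> = (\<Sum>i=1..n. g i * ((odd_r n - odd_r i) * P n i / 2))"
    by (intro sum.cong) (auto simp: Coef)
  finally have "(\<Sum>j=1..n. P n j * odd_r j * (g j + 2 * (\<Sum>i=1..<j. g i)))
     = (\<Sum>j=1..n. P n j * odd_r j * g j + g j * ((odd_r n - odd_r j) * P n j))"
    by (simp add: sum.distrib sum_distrib_left)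
  also have "\<dots> = (\<Sum>j=1..n. odd_r n * (P n j * g j))"
    by (intro sum.cong) (auto simp: algebra_simps)
  finally show ?thesis by (simp add: Tsum_def sum_distrib_left)
qed

definition Qf :: "(nat \<Rightarrow> real) \<Rightarrow> nat \<Rightarrow> real" where
  "Qf F j = (\<Sum>l=1..j. (-1)^(j+l) * 2^tri j l * odd_r l * F l)"

lemma Qf_split: "1 \<le> j \<Longrightarrow> Qf F j = odd_r j * F j + (\<Sum>l=1..<j. (-1)^(j+l) * 2 * odd_r l * F l)"
proof -
  assume j: "1 \<le> j"
  have "Qf F j = (\<Sum>l=1..<Suc j. (-1)^(j+l) * 2^tri j l * odd_r l * F l)"
    unfolding Qf_def atLeastLessThanSuc_atLeastAtMost ..
  also have "\<dots> = (\<Sum>l=1..<j. (-1)^(j+l) * 2^tri j l * odd_r l * F l) + (-1)^(j+j) * 2^tri j j * odd_r j * F j"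
    using j by (simp add: sum.atLeastLessThan_Suc)
  also have "(\<Sum>l=1..<j. (-1)^(j+l) * 2^tri j l * odd_r l * F l) = (\<Sum>l=1..<j. (-1)^(j+l) * 2 * odd_r l * F l)"
    by (intro sum.cong) (auto simp: tri_def)
  finally show ?thesis by (simp add: tri_def)
qed

lemma NQ: "1 \<le> j \<Longrightarrow> Qf F j + 2 * (\<Sum>i=1..<j. Qf F i) = odd_r j * F j"
proof (induction j)
  case 0 then show ?case by simp
next
  case (Suc j)
  show ?case
  proof (cases "j = 0")
    case True then show ?thesis by (simp add: Qf_def tri_def)
  next
    case False
    then have j: "1 \<le> j" by simp
    have IH: "Qf F j + 2 * (\<Sum>i=1..<j. Qf F i) = odd_r j * F j" using Suc.IH j by simp
    have a: "(\<Sum>l=1..<Suc j. (-1)^(Suc j+l) * 2 * odd_r l * F l)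
        = - (\<Sum>l=1..<j. (-1)^(j+l) * 2 * odd_r l * F l) - 2 * odd_r j * F j"
      using j by (simp add: sum.atLeastLessThan_Suc sum_negf[symmetric])
    have "Qf F (Suc j) + 2 * (\<Sum>i=1..<Suc j. Qf F i) = Qf F (Suc j) + Qf F j + (Qf F j + 2 * (\<Sum>i=1..<j. Qf F i))"
      using j by (simp add: sum.atLeastLessThan_Suc)
    also have "\<dots> = Qf F (Suc j) + Qf F j + odd_r j * F j" using IH by simp
    also have "\<dots> = odd_r (Suc j) * F (Suc j)"
    proof -
      have q1: "Qf F (Suc j) = odd_r (Suc j) * F (Suc j) + (\<Sum>l=1..<Suc j. (-1)^(Suc j+l) * 2 * odd_r l * F l)"
        by (rule Qf_split) simp
      show ?thesis unfolding Qf_split[OF j] q1 a by simp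
    qed
    finally show ?thesis .
  qed
qed

definition Mc :: "nat \<Rightarrow> nat \<Rightarrow> real" where
  "Mc j l = (-1)^(j+l) * 2^tri j l * odd_r l / odd_r j^2"

definition Mf :: "(nat \<Rightarrow> real) \<Rightarrow> nat \<Rightarrow> real" where
  "Mf F j = (\<Sum>l=1..j. Mc j l * F l)"

lemma Mf_Qf: "1 \<le> j \<Longrightarrow> Mf F j * odd_r j^2 = Qf F j"
proof -
  assume j: "1 \<le> j"
  have nz: "odd_r j^2 \<noteq> 0" using odd_r_nz[OF j] by simp
  show ?thesis unfolding Mf_def Qf_def Mc_def sum_distrib_right
    by (intro sum.cong) (use nz in auto)
qed

lemma Tsum_cong: "(\<And>j. 1 \<le> j \<Longrightarrow> j \<le> n \<Longrightarrow> F j = G j) \<Longrightarrow> Tsum n F = Tsum n G"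
  unfolding Tsum_def by (intro sum.cong) auto

lemma LM:
  assumes h: "\<And>n. (\<Sum>m=1..n. h m) = Tsum n F"
  shows "(\<Sum>m=1..n. h m / odd_r m) = Tsum n (Mf F)"
proof (rule Tsum_from_diff)
  fix n
  define N where "N = Suc n"
  have nz: "odd_r N \<noteq> 0" using odd_r_nz[of N] by (simp add: N_def)
  have hN: "h N = Tsum N F - Tsum n F"
    using h[of N] h[of n] by (simp add: N_def sum.cl_ivl_Suc)
  also have "\<dots> = (\<Sum>j=1..N. P N j * F j * odd_r j^2) / odd_r N^2"
    unfolding N_def by (rule Diff)
  finally have hN: "h N = (\<Sum>j=1..N. P N j * F j * odd_r j^2) / odd_r N^2" .
  have "(\<Sum>j=1..N. P N j * Mf F j * odd_r j^2) = Tsum N (Qf F)"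
    unfolding Tsum_def by (intro sum.cong) (auto simp: Mf_Qf[symmetric])
  also have "odd_r N * Tsum N (Qf F) = (\<Sum>j=1..N. P N j * odd_r j * (odd_r j * F j))"
    unfolding MultL
  proof (intro sum.cong refl)
    fix x assume "x \<in> {1..N}"
    then show "P N x * odd_r x * (Qf F x + 2 * (\<Sum>i=1..<x. Qf F i)) = P N x * odd_r x * (odd_r x * F x)"
      using NQ[of x F] by simp
  qed
  finally have e: "odd_r N * (\<Sum>j=1..N. P N j * Mf F j * odd_r j^2) = (\<Sum>j=1..N. P N j * F j * odd_r j^2)"
    by (simp add: power2_eq_square algebra_simps)
  show "h (Suc n) / odd_r (Suc n) = (\<Sum>j=1..Suc n. P (Suc n) j * Mf F j * odd_r j^2) / odd_r (Suc n)^2"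
    unfolding N_def[symmetric] hN e[symmetric] using nz by (simp add: field_simps power2_eq_square)
qed



lemma Tsum_delta: "1 \<le> k \<Longrightarrow> Tsum n (\<lambda>j. if j = k then x else 0) = P n k * x"
  unfolding Tsum_def by (cases "k \<le> n") (auto simp: P_zero if_distrib cong: if_cong)

lemma L2: assumes k: "1 \<le> k"
  shows "(\<Sum>m=1..n. P m k / odd_r m^2) = P n k / odd_r k^2"
proof -
  have "(\<Sum>m=1..n. P m k / odd_r m^2) = Tsum n (\<lambda>j. if j = k then 1 / odd_r k^2 else 0)"
  proof (rule Tsum_from_diff)
    fix n
    show "P (Suc n) k / odd_r (Suc n)^2 = (\<Sum>j=1..Suc n. P (Suc n) j * (if j = k then 1 / odd_r k^2 else 0) * odd_r j^2) / odd_r (Suc n)^2"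
    proof -
      have "(\<Sum>j=1..Suc n. P (Suc n) j * (if j = k then 1 / odd_r k^2 else 0) * odd_r j^2)
         = Tsum (Suc n) (\<lambda>j. if j = k then 1 else 0)"
        unfolding Tsum_def using odd_r_nz[OF k] by (intro sum.cong) auto
      then show ?thesis using Tsum_delta[OF k] by simp
    qed
  qed
  also have "\<dots> = P n k / odd_r k^2" using Tsum_delta[OF k] by simp
  finally show ?thesis .
qed

definition K1 :: "nat \<Rightarrow> nat \<Rightarrow> real" where
  "K1 j k = (if k \<le> j then (if j = k then 1 else 2) / odd_r j else 0)"

lemma L1: assumes k: "1 \<le> k"
  shows "(\<Sum>m=1..n. P m k / odd_r m) = Tsum n (\<lambda>j. K1 j k)"
proof (rule Tsum_from_diff)
  fix n
  define N where "N = Suc n"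
  have nz: "odd_r N \<noteq> 0" using odd_r_nz[of N] by (simp add: N_def)
  have key: "(\<Sum>j=1..N. P N j * K1 j k * odd_r j^2) = odd_r N * P N k"
  proof (cases "k \<le> N")
    case False
    then show ?thesis by (auto simp: K1_def P_zero intro!: sum.neutral)
  next
    case True
    have "(\<Sum>j=1..N. P N j * K1 j k * odd_r j^2) = (\<Sum>j=k..N. P N j * K1 j k * odd_r j^2)"
      using k by (intro sum.mono_neutral_right) (auto simp: K1_def)
    also have "\<dots> = P N k * K1 k k * odd_r k^2 + (\<Sum>j=Suc k..N. P N j * K1 j k * odd_r j^2)"
      using True by (simp add: sum.atLeast_Suc_atMost)
    also have "(\<Sum>j=Suc k..N. P N j * K1 j k * odd_r j^2) = 2 * (\<Sum>j=Suc k..N. odd_r j * P N j)"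
      unfolding sum_distrib_left
    proof (intro sum.cong refl)
      fix j assume "j \<in> {Suc k..N}"
      then have "j \<ge> 1" "k \<le> j" "j \<noteq> k" using k by auto
      then show "P N j * K1 j k * odd_r j^2 = 2 * (odd_r j * P N j)"
        using odd_r_nz[of j] by (simp add: K1_def power2_eq_square)
    qed
    also have "\<dots> = (odd_r N - odd_r k) * P N k" using Coef[OF k True] by simp
    finally show ?thesis using odd_r_nz[OF k] by (simp add: K1_def power2_eq_square algebra_simps)
  qed
  show "P (Suc n) k / odd_r (Suc n) = (\<Sum>j=1..Suc n. P (Suc n) j * K1 j k * odd_r j^2) / odd_r (Suc n)^2"
    unfolding N_def[symmetric] key using nz by (simp add: power2_eq_square)
qed



lemma VW: "l \<le> i \<Longrightarrow> 1 \<le> l \<Longrightarrow> Vsharp i l s = odd_r i / odd_r l * Wsum i l s"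
  using odd_r_nz[of l] by (cases s) (auto simp: Vsharp_def tri_def)

lemma Vrec: assumes "l \<le> j" "1 \<le> l"
  shows "Vsharp j l (1#s) = (\<Sum>i=l..j. 2^tri j i * odd_r j / odd_r i^2 * Vsharp i l s)"
proof -
  have "Vsharp j l (1#s) = odd_r j / odd_r l * (\<Sum>i=l..j. 2^tri j i / odd_r i * Wsum i l s)"
    using assms by (simp add: Vsharp_def)
  also have "\<dots> = (\<Sum>i=l..j. 2^tri j i * odd_r j / odd_r i^2 * Vsharp i l s)"
    unfolding sum_distrib_left
  proof (intro sum.cong refl)
    fix i assume i: "i \<in> {l..j}"
    then have "l \<le> i" "1 \<le> i" using assms by auto
    then show "odd_r j / odd_r l * (2^tri j i / odd_r i * Wsum i l s) = 2^tri j i * odd_r j / odd_r i^2 * Vsharp i l s"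
      using VW[of l i s] assms odd_r_nz[of i] by (simp add: power2_eq_square field_simps)
  qed
  finally show ?thesis .
qed

definition Kc :: "nat \<Rightarrow> nat \<Rightarrow> nat \<Rightarrow> real" where
  "Kc c j l = (if l \<le> j then (if c = 1 then K1 j l else (-1)^(j+l) / odd_r j^3 * Vsharp j l (replicate (c-3) 1)) else 0)"

lemma neg1_sq: "(-1::real)^i * (-1)^i = 1"
  by (induct i) auto

lemma Mf_delta: "1 \<le> l \<Longrightarrow> Mf (\<lambda>i. if i = l then x else 0) j = (if l \<le> j then Mc j l * x else 0)"
  unfolding Mf_def by (auto simp: if_distrib cong: if_cong)

lemma K3: assumes "1 \<le> l"
  shows "Kc 3 j l = Mf (\<lambda>i. if i = l then 1/odd_r l^2 else 0) j"
proof -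
  have nz: "odd_r l \<noteq> 0" using odd_r_nz[OF assms] .
  show ?thesis
    unfolding Mf_delta[OF assms] using nz
    by (auto simp: Kc_def Mc_def Vsharp_def tri_def power2_eq_square power3_eq_cube field_simps)
qed

lemma Kstep: assumes c: "3 \<le> c" and l: "1 \<le> l"
  shows "Kc (Suc c) j l = Mf (\<lambda>i. Kc c i l) j"
proof (cases "l \<le> j")
  case False
  then show ?thesis unfolding Mf_def by (auto simp: Kc_def intro!: sum.neutral)
next
  case True
  have rep: "replicate (Suc c - 3) (1::nat) = 1 # replicate (c-3) 1"
  proof -
    have "Suc c - 3 = Suc (c - 3)" using c by simp
    then show ?thesis by simp
  qed
  have "Mf (\<lambda>i. Kc c i l) j = (\<Sum>i=l..j. Mc j i * Kc c i l)"
    unfolding Mf_def using l by (intro sum.mono_neutral_right) (auto simp: Kc_def)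
  also have "\<dots> = (-1)^(j+l) / odd_r j^3 * (\<Sum>i=l..j. 2^tri j i * odd_r j / odd_r i^2 * Vsharp i l (replicate (c-3) 1))"
    unfolding sum_distrib_left
  proof (intro sum.cong refl)
    fix i assume i: "i \<in> {l..j}"
    then have i1: "1 \<le> i" "l \<le> i" using l by auto
    have nzi: "odd_r i \<noteq> 0" "odd_r j \<noteq> 0" using odd_r_nz[of i] odd_r_nz[of j] i1 i by auto
    have sg: "(-1::real)^(j+i) * (-1)^(i+l) = (-1)^(j+l)"
    proof -
      have "(-1::real)^(j+i) * (-1)^(i+l) = (-1)^(j+l) * ((-1)^i * (-1)^i)" by (simp add: power_add algebra_simps)
      then show ?thesis by (simp add: neg1_sq)
    qed
    show "Mc j i * Kc c i l = (-1)^(j+l) / odd_r j^3 * (2^tri j i * odd_r j / odd_r i^2 * Vsharp i l (replicate (c-3) 1))"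
      using c i1 nzi sg[symmetric] by (simp add: Mc_def Kc_def power2_eq_square power3_eq_cube field_simps)
  qed
  also have "\<dots> = Kc (Suc c) j l"
    using True c l unfolding Kc_def rep Vrec[OF True l] by simp
  finally show ?thesis by simp
qed

lemma Lc3: assumes c: "3 \<le> c" and k: "1 \<le> k"
  shows "(\<Sum>m=1..n. P m k / odd_r m^c) = Tsum n (\<lambda>j. Kc c j k)"
  using c
proof (induction c arbitrary: n rule: nat_induct_at_least)
  case base
  have h: "\<And>n. (\<Sum>m=1..n. P m k / odd_r m^2) = Tsum n (\<lambda>i. if i = k then 1/odd_r k^2 else 0)"
    using L2[OF k] Tsum_delta[OF k] by simp
  have "(\<Sum>m=1..n. P m k / odd_r m^3) = (\<Sum>m=1..n. P m k / odd_r m^2 / odd_r m)"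
    by (simp add: power2_eq_square power3_eq_cube)
  also have "\<dots> = Tsum n (Mf (\<lambda>i. if i = k then 1/odd_r k^2 else 0))"
    by (rule LM[OF h])
  also have "\<dots> = Tsum n (\<lambda>j. Kc 3 j k)"
    by (rule Tsum_cong) (simp add: K3[OF k])
  finally show ?case .
next
  case (Suc c)
  have "(\<Sum>m=1..n. P m k / odd_r m^Suc c) = (\<Sum>m=1..n. P m k / odd_r m^c / odd_r m)"
    by (simp add: mult.commute)
  also have "\<dots> = Tsum n (Mf (\<lambda>j. Kc c j k))"
    by (rule LM[OF Suc.IH])
  also have "\<dots> = Tsum n (\<lambda>j. Kc (Suc c) j k)"
    by (rule Tsum_cong) (simp add: Kstep[OF Suc.hyps k])
  finally show ?case .
qed

lemma Lgen: assumes c: "1 \<le> c" "c \<noteq> 2" and k: "1 \<le> k"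
  shows "(\<Sum>m=1..n. P m k / odd_r m^c) = Tsum n (\<lambda>j. Kc c j k)"
proof (cases "c = 1")
  case True
  have "(\<Sum>m=1..n. P m k / odd_r m^c) = Tsum n (\<lambda>j. K1 j k)" using L1[OF k] True by simp
  also have "\<dots> = Tsum n (\<lambda>j. Kc c j k)" using True by (intro Tsum_cong) (auto simp: Kc_def K1_def)
  finally show ?thesis .
next
  case False
  then show ?thesis using c Lc3[OF _ k] by simp
qed



lemma Sbin: "(real M - 1) * (\<Sum>i=0..m. (-1)^i * real (M choose i) * (real M - 2*real i))
   = (-1)^m * (real m + 1) * (real M - 1 - 2*real m) * real (M choose Suc m)"
proof (induction m)
  case 0 then show ?case by (simp add: algebra_simps)
next
  case (Suc m)
  define X where "X = real (M choose Suc m)"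
  define s where "s = ((-1::real)^m)"
  have st: "real (Suc (Suc m)) * real (M choose Suc (Suc m)) = (real M - real m - 1) * X"
  proof (cases "Suc m \<le> M")
    case True
    have "real (Suc (Suc m)) * real (M choose Suc (Suc m)) = real (M - Suc m) * X"
      unfolding X_def using binom_step[of M "Suc m"] by (metis of_nat_mult)
    moreover have "real (M - Suc m) = real M - real m - 1" using True by (simp add: of_nat_diff)
    ultimately show ?thesis by simp
  next
    case False
    then show ?thesis by (simp add: X_def binomial_eq_0)
  qed
  have "(real M - 1) * (\<Sum>i=0..Suc m. (-1)^i * real (M choose i) * (real M - 2*real i))
      = s * (real m + 1) * (real M - 1 - 2*real m) * X + (real M - 1) * (- s * X * (real M - 2*real (Suc m)))"
    using Suc unfolding X_def s_def by (simp add: algebra_simps)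
  also have "\<dots> = - s * (real M - 3 - 2*real m) * ((real M - real m - 1) * X)"
    by (simp add: algebra_simps)
  also have "\<dots> = (-1)^Suc m * (real (Suc m) + 1) * (real M - 1 - 2*real (Suc m)) * real (M choose Suc (Suc m))"
    unfolding st[symmetric] s_def by (simp add: algebra_simps)
  finally show ?case .
qed

definition g0 :: "nat \<Rightarrow> real" where "g0 j = 2 * (-1)^(j+1) / odd_r j"

lemma Zsum: assumes N: "2 \<le> N"
  shows "(\<Sum>j=1..N. P N j * g0 j * odd_r j^2) = 0"
proof -
  define M where "M = 2*N - 1"
  have RM: "real M = 2 * real N - 1" using N by (simp add: M_def of_nat_diff)
  have "(\<Sum>j=1..N. P N j * g0 j * odd_r j^2) = 2 * Bn N * (\<Sum>j=1..N. (-1)^(j+1) * real (M choose (N-j)) * odd_r j)"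
    unfolding sum_distrib_left
  proof (intro sum.cong refl)
    fix j assume j: "j \<in> {1..N}"
    then show "P N j * g0 j * odd_r j^2 = 2 * Bn N * ((-1)^(j+1) * real (M choose (N-j)) * odd_r j)"
      using odd_r_nz[of j] by (simp add: P_def g0_def M_def power2_eq_square)
  qed
  also have "(\<Sum>j=1..N. (-1)^(j+1) * real (M choose (N-j)) * odd_r j)
      = (\<Sum>i=0..N-1. (-1)^(N-i+1) * real (M choose i) * odd_r (N-i))"
    by (rule sum.reindex_bij_witness[where i="\<lambda>i. N - i" and j="\<lambda>j. N - j"]) (use N in auto)
  also have "\<dots> = (-1)^(N+1) * (\<Sum>i=0..N-1. (-1)^i * real (M choose i) * (real M - 2*real i))"
    unfolding sum_distrib_left
  proof (intro sum.cong refl)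
    fix i assume i: "i \<in> {0..N-1}"
    then have iN: "i \<le> N" by auto
    have sg: "(-1::real)^(N-i+1) = (-1)^(N+1) * (-1)^i"
    proof -
      have e: "N+1+i = N-i+1+i+i" using iN by simp
      have "(-1::real)^(N+1) * (-1)^i = (-1)^(N+1+i)" by (simp add: power_add)
      also have "\<dots> = (-1)^(N-i+1+i+i)" using e by simp
      also have "\<dots> = (-1)^(N-i+1) * ((-1)^i * (-1)^i)" by (simp only: power_add mult.assoc)
      finally have "(-1::real)^(N+1) * (-1)^i = (-1)^(N-i+1) * ((-1)^i * (-1)^i)" .
      then show ?thesis by (simp add: neg1_sq)
    qed
    show "(-1)^(N-i+1) * real (M choose i) * odd_r (N-i) = (-1)^(N+1) * ((-1)^i * real (M choose i) * (real M - 2*real i))"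
      unfolding sg RM using iN by (simp add: odd_r_def of_nat_diff algebra_simps)
  qed
  also have "(\<Sum>i=0..N-1. (-1)^i * real (M choose i) * (real M - 2*real i)) = 0"
  proof -
    have "(real M - 1) * (\<Sum>i=0..N-1. (-1)^i * real (M choose i) * (real M - 2*real i)) = 0"
      unfolding Sbin using N RM by (simp add: of_nat_diff)
    moreover have "real M - 1 \<noteq> 0" using N RM by simp
    ultimately show ?thesis by simp
  qed
  finally show ?thesis by simp
qed

lemma L0: "1 \<le> n \<Longrightarrow> Tsum n g0 = 1"
proof (induction n rule: nat_induct_at_least)
  case base
  show ?case by (simp add: Tsum_def P_def Bn_def g0_def odd_r_def)
next
  case (Suc n)
  have "Tsum (Suc n) g0 = Tsum n g0 + (\<Sum>j=1..Suc n. P (Suc n) j * g0 j * odd_r j^2) / odd_r (Suc n)^2"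
    using Diff[of n g0] by simp
  also have "(\<Sum>j=1..Suc n. P (Suc n) j * g0 j * odd_r j^2) = 0"
    using Suc.hyps by (intro Zsum) simp
  finally show ?case using Suc.IH by simp
qed



lemma Tsum_upto: "k \<le> n \<Longrightarrow> Tsum k g = (\<Sum>j=1..n. P k j * g j)"
  unfolding Tsum_def by (rule sum.mono_neutral_left) (auto simp: P_zero)

lemma tstar_cons_swap:
  assumes h: "\<And>m. 1 \<le> m \<Longrightarrow> tstar m s = Tsum m g"
  shows "tstar n (c#s) = (\<Sum>j=1..n. g j * (\<Sum>k=1..n. P k j / odd_r k^c))"
proof -
  have "tstar n (c#s) = (\<Sum>k=1..n. tstar k s / odd_r k^c)" by simp
  also have "\<dots> = (\<Sum>k=1..n. \<Sum>j=1..n. P k j * g j / odd_r k^c)"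
    unfolding sum_divide_distrib[symmetric]
    by (intro sum.cong refl) (auto simp: h Tsum_upto)
  also have "\<dots> = (\<Sum>j=1..n. \<Sum>k=1..n. P k j * g j / odd_r k^c)" by (rule sum.swap)
  also have "\<dots> = (\<Sum>j=1..n. g j * (\<Sum>k=1..n. P k j / odd_r k^c))"
    by (simp add: sum_distrib_left algebra_simps)
  finally show ?thesis .
qed

lemma rep2:
  assumes h: "\<And>m. 1 \<le> m \<Longrightarrow> tstar m s = Tsum m g"
  shows "tstar n (2#s) = Tsum n (\<lambda>j. g j / odd_r j^2)"
proof -
  have "tstar n (2#s) = (\<Sum>j=1..n. g j * (\<Sum>k=1..n. P k j / odd_r k^2))"
    by (rule tstar_cons_swap[OF h])
  also have "\<dots> = Tsum n (\<lambda>j. g j / odd_r j^2)"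
    unfolding Tsum_def
  proof (intro sum.cong refl)
    fix x assume "x \<in> {1..n}"
    then show "g x * (\<Sum>k=1..n. P k x / odd_r k^2) = P n x * (g x / odd_r x^2)"
      using L2[of x n] by simp
  qed
  finally show ?thesis .
qed

lemma rep_repl:
  assumes h: "\<And>m. 1 \<le> m \<Longrightarrow> tstar m s = Tsum m g"
  shows "1 \<le> n \<Longrightarrow> tstar n (replicate r 2 @ s) = Tsum n (\<lambda>j. g j / odd_r j^(2*r))"
proof (induction r arbitrary: n)
  case 0
  then show ?case using h by simp
next
  case (Suc r)
  have "tstar n (replicate (Suc r) 2 @ s) = tstar n (2 # (replicate r 2 @ s))" by simp
  also have "\<dots> = Tsum n (\<lambda>j. g j / odd_r j^(2*r) / odd_r j^2)"
    by (rule rep2) (rule Suc.IH)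
  also have "\<dots> = Tsum n (\<lambda>j. g j / odd_r j^(2*Suc r))"
    by (simp add: power_add power2_eq_square mult_ac)
  finally show ?case .
qed

lemma repc:
  assumes c: "1 \<le> c" "c \<noteq> 2" and h: "\<And>m. 1 \<le> m \<Longrightarrow> tstar m s = Tsum m g"
  shows "tstar n (c#s) = Tsum n (\<lambda>j. \<Sum>l=1..j. Kc c j l * g l)"
proof -
  have "tstar n (c#s) = (\<Sum>j=1..n. g j * (\<Sum>k=1..n. P k j / odd_r k^c))"
    by (rule tstar_cons_swap[OF h])
  also have "\<dots> = (\<Sum>j=1..n. g j * Tsum n (\<lambda>i. Kc c i j))"
  proof (intro sum.cong refl)
    fix x assume "x \<in> {1..n}"
    then show "g x * (\<Sum>k=1..n. P k x / odd_r k^c) = g x * Tsum n (\<lambda>i. Kc c i x)"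
      using Lgen[OF c, of x n] by simp
  qed
  also have "\<dots> = (\<Sum>j=1..n. \<Sum>i=1..n. P n i * (Kc c i j * g j))"
    unfolding Tsum_def by (simp add: sum_distrib_left algebra_simps)
  also have "\<dots> = (\<Sum>i=1..n. \<Sum>j=1..n. P n i * (Kc c i j * g j))" by (rule sum.swap)
  also have "\<dots> = (\<Sum>i=1..n. P n i * (\<Sum>j=1..n. Kc c i j * g j))"
    by (simp add: sum_distrib_left)
  also have "\<dots> = Tsum n (\<lambda>j. \<Sum>l=1..j. Kc c j l * g l)"
    unfolding Tsum_def
  proof (intro sum.cong refl)
    fix i assume i: "i \<in> {1..n}"
    have "(\<Sum>j=1..n. Kc c i j * g j) = (\<Sum>l=1..i. Kc c i l * g l)"
      using i by (intro sum.mono_neutral_right) (auto simp: Kc_def)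
    then show "P n i * (\<Sum>j=1..n. Kc c i j * g j) = P n i * (\<Sum>l=1..i. Kc c i l * g l)" by simp
  qed
  finally show ?thesis .
qed

fun Gd :: "nat \<Rightarrow> (nat \<Rightarrow> nat) \<Rightarrow> (nat \<Rightarrow> nat) \<Rightarrow> nat \<Rightarrow> real" where
  "Gd 0 c a k = g0 k / odd_r k^(2 * a 0)"
| "Gd (Suc d) c a k = (\<Sum>l=1..k. Kc (c 1) k l * Gd d (\<lambda>i. c (Suc i)) (\<lambda>i. a (Suc i)) l) / odd_r k^(2 * a 0)"

lemma mix_Suc: "mix_index (Suc d) c a = replicate (a 0) 2 @ c 1 # mix_index d (\<lambda>i. c (Suc i)) (\<lambda>i. a (Suc i))"
proof -
  have u: "[1..<Suc d + 1] = 1 # map Suc [1..<d+1]"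
    by (simp add: upt_conv_Cons map_Suc_upt del: upt_Suc)
  show ?thesis unfolding mix_index_def u by (simp add: comp_def)
qed

lemma T1:
  assumes "1 \<le> n" "\<forall>i\<in>{1..d}. 1 \<le> c i \<and> c i \<noteq> 2"
  shows "tstar n (mix_index d c a) = Tsum n (Gd d c a)"
  using assms
proof (induction d arbitrary: n c a)
  case 0
  have h: "\<And>m. 1 \<le> m \<Longrightarrow> tstar m [] = Tsum m g0" using L0 by simp
  show ?case unfolding mix_index_def using rep_repl[OF h 0(1), of "a 0"] by simp
next
  case (Suc d)
  have cc: "1 \<le> c 1" "c 1 \<noteq> 2" using Suc.prems(2) by auto
  have IH: "\<And>m. 1 \<le> m \<Longrightarrow> tstar m (mix_index d (\<lambda>i. c (Suc i)) (\<lambda>i. a (Suc i))) = Tsum m (Gd d (\<lambda>i. c (Suc i)) (\<lambda>i. a (Suc i)))"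
    using Suc.IH Suc.prems(2) by auto
  have h2: "\<And>m. 1 \<le> m \<Longrightarrow> tstar m (c 1 # mix_index d (\<lambda>i. c (Suc i)) (\<lambda>i. a (Suc i)))
        = Tsum m (\<lambda>j. \<Sum>l=1..j. Kc (c 1) j l * Gd d (\<lambda>i. c (Suc i)) (\<lambda>i. a (Suc i)) l)"
    by (rule repc[OF cc IH])
  show ?case unfolding mix_Suc using rep_repl[OF h2 Suc.prems(1), of "a 0"] by simp
qed



lemma delta1: "delta 1 = 1" by (simp add: delta_def)
lemma delta_ge3: "3 \<le> x \<Longrightarrow> delta x = 0" by (simp add: delta_def)

lemma V0: "1 \<le> k \<Longrightarrow> Vsharp 0 k [] = -2 / odd_r k"
  by (simp add: Vsharp_def tri_def odd_r_def)

lemma KL: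
  fixes pp qq e :: nat
  assumes l: "1 \<le> l" "l \<le> k" and x: "x = 1 \<or> 3 \<le> x"
  shows "((-1) ^ (k * (delta 1 + delta x)) / (odd_r k powi (2 * int pp - int (delta 1 + delta x) + 3)) * Vsharp 0 k [])
       * ((-1) ^ (l * (delta x + e)) / (odd_r l powi (2 * int qq - int (delta x + e) + 3)) * Vsharp k l (replicate (x - 3) 1))
       = Kc x k l * ((-1) ^ (l * (delta 1 + e)) / (odd_r l powi (2 * int qq - int (delta 1 + e) + 3)) * Vsharp 0 l []) / odd_r k^(2 * pp)"
proof -
  have k1: "1 \<le> k" using l by simp
  have nzk: "odd_r k \<noteq> 0" using odd_r_nz[OF k1] .
  have nzl: "odd_r l \<noteq> 0" using odd_r_nz[OF l(1)] .
  define Q where "Q = odd_r l powi (2 * int qq - int e + 2)"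
  have Qnz: "Q \<noteq> 0" using nzl by (simp add: Q_def)
  have sl: "(-1::real)^l * (-1)^l = 1" by (rule neg1_sq)
  have sk: "(-1::real)^k * (-1)^k = 1" by (rule neg1_sq)
  from x show ?thesis
  proof
    assume x1: "x = 1"
    have e1: "2 * int pp - int (delta 1 + delta 1) + 3 = int (2*pp+1)" by (simp add: delta_def)
    have e2: "2 * int qq - int (delta 1 + e) + 3 = 2 * int qq - int e + 2" by (simp add: delta_def)
    have s1: "(-1::real) ^ (k * (delta 1 + delta 1)) = 1"
    proof -
      have "(-1::real) ^ (k * (delta 1 + delta 1)) = (-1)^k * (-1)^k" by (simp add: delta_def mult_2_right power_add)
      then show ?thesis using sk by simp
    qed
    have rep: "replicate (1 - 3) (1::nat) = []" by simp
    have Kx: "Kc 1 k l = (if k = l then 1 else 2) / odd_r k" using l by (simp add: Kc_def K1_def)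
    have Vkl: "Vsharp k l [] = (if k = l then 1 else 2 * odd_r k / odd_r l)" by (simp add: Vsharp_def tri_def)
    show ?thesis
      unfolding x1
      unfolding e1 e2 s1 rep Kx Vkl V0[OF k1] V0[OF l(1)] Q_def[symmetric] power_int_of_nat
      using nzk nzl Qnz by (auto simp: field_simps power_add)
  next
    assume x3: "3 \<le> x"
    have dx: "delta x = 0" using x3 by (simp add: delta_def)
    have e1: "2 * int pp - int (delta 1 + delta x) + 3 = int (2*pp+2)" using dx by (simp add: delta_def)
    have e2: "odd_r l powi (2 * int qq - int (delta x + e) + 3) = Q * odd_r l"
    proof -
      have ex: "2 * int qq - int (delta x + e) + 3 = (2 * int qq - int e + 2) + 1" using dx by simp
      show ?thesis unfolding ex Q_def by (rule power_int_add_1) (simp add: nzl)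
    qed
    have e3: "2 * int qq - int (delta 1 + e) + 3 = 2 * int qq - int e + 2" by (simp add: delta_def)
    have s1: "(-1::real) ^ (k * (delta 1 + delta x)) = (-1)^k" using dx by (simp add: delta_def)
    have s2: "(-1::real) ^ (l * (delta x + e)) = (-1)^(l*e)" using dx by simp
    have s3: "(-1::real) ^ (l * (delta 1 + e)) = (-1)^l * (-1)^(l*e)" by (simp add: delta_def power_add)
    have Kx: "Kc x k l = (-1)^k * (-1)^l / odd_r k^3 * Vsharp k l (replicate (x - 3) 1)"
      using x3 l by (simp add: Kc_def power_add)
    have sl': "(-1::real)^l * ((-1)^l * z) = z" for z using sl by (simp add: mult.assoc[symmetric])
    show ?thesis
      unfolding e1 e2 e3 s1 s2 s3 Kx V0[OF k1] V0[OF l(1)] Q_def[symmetric] power_int_of_nat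
      using nzk nzl Qnz sl by (simp add: field_simps power_add power3_eq_cube power2_eq_square)
  qed
qed



definition phi :: "nat \<Rightarrow> (nat \<Rightarrow> nat) \<Rightarrow> (nat \<Rightarrow> nat) \<Rightarrow> nat list \<Rightarrow> nat \<Rightarrow> real" where
  "phi d c a ks i = (-1) ^ (ks ! i * deltai d c i)
          / (odd_r (ks ! i) powi (2 * int (a i) - int (deltai d c i) + 3))
          * Vsharp (if i = 0 then 0 else ks ! (i - 1)) (ks ! i)
                   (replicate (cext d c i - 3) 1)"

lemma chains_finite: "finite (chains n d)"
proof (rule finite_subset)
  show "chains n d \<subseteq> {xs. set xs \<subseteq> {1..n} \<and> length xs = d + 1}" by (auto simp: chains_def)
  show "finite {xs. set xs \<subseteq> {1..n} \<and> length xs = d + 1}" by (rule finite_lists_length_eq) simp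
qed

lemma chains_0: "chains n 0 = (\<lambda>k. [k]) ` {1..n}"
  by (auto simp: chains_def length_Suc_conv)

lemma chains_Suc: "chains n (Suc d) = (\<lambda>(k,ks). k#ks) ` (SIGMA k:{1..n}. chains k d)"
proof
  show "chains n (Suc d) \<subseteq> (\<lambda>(k,ks). k#ks) ` (SIGMA k:{1..n}. chains k d)"
  proof
    fix xs assume xs: "xs \<in> chains n (Suc d)"
    then obtain k ks where e: "xs = k # ks" by (cases xs) (auto simp: chains_def)
    have "k \<in> {1..n}" "ks \<in> chains k d" using xs unfolding e chains_def by auto
    then show "xs \<in> (\<lambda>(k,ks). k#ks) ` (SIGMA k:{1..n}. chains k d)" unfolding e by force
  qed
next
  show "(\<lambda>(k,ks). k#ks) ` (SIGMA k:{1..n}. chains k d) \<subseteq> chains n (Suc d)"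
    by (auto simp: chains_def subset_iff)
qed

lemma sum_chains_Suc: "(\<Sum>ks\<in>chains n (Suc d). F ks) = (\<Sum>k=1..n. \<Sum>ks\<in>chains k d. F (k#ks))"
proof -
  have inj: "inj_on (\<lambda>(k,ks). k#ks) (SIGMA k:{1..n}. chains k d)" by (auto simp: inj_on_def)
  have "(\<Sum>ks\<in>chains n (Suc d). F ks) = (\<Sum>p\<in>(SIGMA k:{1..n}. chains k d). F ((\<lambda>(k,ks). k#ks) p))"
    unfolding chains_Suc using sum.reindex[OF inj, of F] by (simp add: comp_def)
  also have "\<dots> = (\<Sum>(k,ks)\<in>(SIGMA k:{1..n}. chains k d). F (k#ks))"
    by (rule sum.cong) auto
  also have "\<dots> = (\<Sum>k=1..n. \<Sum>ks\<in>chains k d. F (k#ks))"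
    by (rule sum.Sigma[symmetric]) (auto simp: chains_finite)
  finally show ?thesis .
qed

lemma chains_hd: "ks \<in> chains k d \<Longrightarrow> 1 \<le> ks!0 \<and> ks!0 \<le> k"
  by (cases ks) (auto simp: chains_def)

lemma cext_shift: "1 \<le> i \<Longrightarrow> cext (Suc d) c (Suc i) = cext d (\<lambda>j. c (Suc j)) i"
  by (simp add: cext_def)

lemma deltai_shift: "1 \<le> i \<Longrightarrow> deltai (Suc d) c (Suc i) = deltai d (\<lambda>j. c (Suc j)) i"
  unfolding deltai_def using cext_shift[of i d c] cext_shift[of "Suc i" d c] by simp

lemma PhiSplit:
  assumes c: "1 \<le> c 1" "c 1 \<noteq> 2" and ks: "ks \<in> chains k d"
  shows "prod (phi (Suc d) c a (k#ks)) {0..Suc d}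
     = Kc (c 1) k (ks!0) * prod (phi d (\<lambda>i. c (Suc i)) (\<lambda>i. a (Suc i)) ks) {0..d} / odd_r k^(2 * a 0)"
proof -
  define c' where "c' = (\<lambda>i. c (Suc i))"
  define a' where "a' = (\<lambda>i. a (Suc i))"
  define R where "R = prod (phi d c' a' ks) {1..d}"
  have l: "1 \<le> ks!0" "ks!0 \<le> k" using chains_hd[OF ks] by auto
  have big: "prod (phi (Suc d) c a (k#ks)) {0..Suc d} = phi (Suc d) c a (k#ks) 0 * (phi (Suc d) c a (k#ks) 1 * R)"
  proof -
    have "prod (phi (Suc d) c a (k#ks)) {0..Suc d} = phi (Suc d) c a (k#ks) 0 * prod (\<lambda>i. phi (Suc d) c a (k#ks) (Suc i)) {0..d}"
      by (simp only: prod.atLeast0_atMost_Suc_shift comp_def)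
    also have "prod (\<lambda>i. phi (Suc d) c a (k#ks) (Suc i)) {0..d} = phi (Suc d) c a (k#ks) 1 * prod (\<lambda>i. phi (Suc d) c a (k#ks) (Suc i)) {1..d}"
      by (subst prod.atLeast_Suc_atMost) auto
    also have "prod (\<lambda>i. phi (Suc d) c a (k#ks) (Suc i)) {1..d} = R"
      unfolding R_def
    proof (rule prod.cong[OF refl])
      fix i assume i: "i \<in> {1..d}"
      then have i1: "1 \<le> i" by simp
      show "phi (Suc d) c a (k#ks) (Suc i) = phi d c' a' ks i"
        unfolding phi_def c'_def a'_def deltai_shift[OF i1] cext_shift[OF i1] using i1 by simp
    qed
    finally show ?thesis .
  qed
  have small: "prod (phi d c' a' ks) {0..d} = phi d c' a' ks 0 * R"
    unfolding R_def by (subst prod.atLeast_Suc_atMost) auto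
  have x: "c 1 = 1 \<or> 3 \<le> c 1" using c by auto
  have d0: "deltai (Suc d) c 0 = delta 1 + delta (c 1)" by (simp add: deltai_def cext_def)
  have d1: "deltai (Suc d) c 1 = delta (c 1) + delta (cext d c' 1)"
    by (simp add: deltai_def cext_def c'_def)
  have d0': "deltai d c' 0 = delta 1 + delta (cext d c' 1)" by (simp add: deltai_def cext_def)
  have p0: "phi (Suc d) c a (k#ks) 0 = (-1) ^ (k * (delta 1 + delta (c 1))) / (odd_r k powi (2 * int (a 0) - int (delta 1 + delta (c 1)) + 3)) * Vsharp 0 k []"
    unfolding phi_def d0 by (simp add: cext_def)
  have p1: "phi (Suc d) c a (k#ks) 1 = (-1) ^ (ks!0 * (delta (c 1) + delta (cext d c' 1))) / (odd_r (ks!0) powi (2 * int (a 1) - int (delta (c 1) + delta (cext d c' 1)) + 3)) * Vsharp k (ks!0) (replicate (c 1 - 3) 1)"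
    unfolding phi_def d1 by (simp add: cext_def)
  have p0': "phi d c' a' ks 0 = (-1) ^ (ks!0 * (delta 1 + delta (cext d c' 1))) / (odd_r (ks!0) powi (2 * int (a 1) - int (delta 1 + delta (cext d c' 1)) + 3)) * Vsharp 0 (ks!0) []"
    unfolding phi_def d0' by (simp add: cext_def a'_def)
  have "prod (phi (Suc d) c a (k#ks)) {0..Suc d} = (phi (Suc d) c a (k#ks) 0 * phi (Suc d) c a (k#ks) 1) * R"
    unfolding big by (simp add: mult.assoc)
  also have "\<dots> = Kc (c 1) k (ks!0) * phi d c' a' ks 0 / odd_r k^(2 * a 0) * R"
    unfolding p0 p1 p0' using KL[OF l x, where pp="a 0" and qq="a 1" and e="delta (cext d c' 1)"] by simp
  also have "\<dots> = Kc (c 1) k (ks!0) * prod (phi d c' a' ks) {0..d} / odd_r k^(2 * a 0)"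
    unfolding small by simp
  finally show ?thesis unfolding c'_def a'_def .
qed

lemma T2:
  assumes "\<forall>i\<in>{1..d}. 1 \<le> c i \<and> c i \<noteq> 2"
  shows "(\<Sum>ks\<in>chains n d. w (ks!0) * prod (phi d c a ks) {0..d}) = (\<Sum>k=1..n. w k * Gd d c a k)"
  using assms
proof (induction d arbitrary: n c a w)
  case 0
  have "(\<Sum>ks\<in>chains n 0. w (ks!0) * prod (phi 0 c a ks) {0..0}) = (\<Sum>k=1..n. w k * phi 0 c a [k] 0)"
    unfolding chains_0 by (subst sum.reindex) (auto simp: inj_on_def)
  also have "\<dots> = (\<Sum>k=1..n. w k * Gd 0 c a k)"
  proof (intro sum.cong refl)
    fix k assume k: "k \<in> {1..n}"
    then have k1: "1 \<le> k" by simp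
    have dd: "deltai 0 c 0 = 3" by (simp add: deltai_def cext_def delta_def)
    have s: "(-1::real)^(k*3) = (-1)^k"
      by (simp add: mult.commute[of k 3] power_mult)
    have "phi 0 c a [k] 0 = (-1)^k / odd_r k ^ (2 * a 0) * (-2 / odd_r k)"
    proof -
      have ie: "2 * int (a 0) - int 3 + 3 = int (2 * a 0)" by simp
      show ?thesis unfolding phi_def dd ie power_int_of_nat by (simp add: cext_def V0[OF k1] s)
    qed
    also have "\<dots> = Gd 0 c a k"
      using odd_r_nz[OF k1] by (simp add: g0_def field_simps)
    finally show "w k * phi 0 c a [k] 0 = w k * Gd 0 c a k" by simp
  qed
  finally show ?case .
next
  case (Suc d)
  have cc: "1 \<le> c 1" "c 1 \<noteq> 2" using Suc.prems by auto
  have IH: "\<And>n w. (\<Sum>ks\<in>chains n d. w (ks!0) * prod (phi d (\<lambda>i. c (Suc i)) (\<lambda>i. a (Suc i)) ks) {0..d})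
      = (\<Sum>k=1..n. w k * Gd d (\<lambda>i. c (Suc i)) (\<lambda>i. a (Suc i)) k)"
    using Suc.IH Suc.prems by auto
  have "(\<Sum>ks\<in>chains n (Suc d). w (ks!0) * prod (phi (Suc d) c a ks) {0..Suc d})
      = (\<Sum>k=1..n. \<Sum>ks\<in>chains k d. w k * prod (phi (Suc d) c a (k#ks)) {0..Suc d})"
    by (simp add: sum_chains_Suc)
  also have "\<dots> = (\<Sum>k=1..n. w k / odd_r k^(2 * a 0) * (\<Sum>ks\<in>chains k d. Kc (c 1) k (ks!0) * prod (phi d (\<lambda>i. c (Suc i)) (\<lambda>i. a (Suc i)) ks) {0..d}))"
    unfolding sum_distrib_left
  proof (intro sum.cong refl)
    fix k ks assume ks: "ks \<in> chains k d"
    show "w k * prod (phi (Suc d) c a (k#ks)) {0..Suc d} = w k / odd_r k^(2 * a 0) * (Kc (c 1) k (ks!0) * prod (phi d (\<lambda>i. c (Suc i)) (\<lambda>i. a (Suc i)) ks) {0..d})"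
      unfolding PhiSplit[of c, OF cc ks] by simp
  qed
  also have "\<dots> = (\<Sum>k=1..n. w k / odd_r k^(2 * a 0) * (\<Sum>l=1..k. Kc (c 1) k l * Gd d (\<lambda>i. c (Suc i)) (\<lambda>i. a (Suc i)) l))"
    using IH by simp
  also have "\<dots> = (\<Sum>k=1..n. w k * Gd (Suc d) c a k)"
    by simp
  finally show ?case .
qed



theorem corollary2p4:
  fixes n d :: nat and c a :: "nat \<Rightarrow> nat"
  assumes "n \<ge> 1"
    and "\<forall>i\<in>{1..d}. c i \<ge> 1 \<and> c i \<noteq> 2"
  shows "tstar n (mix_index d c a) =
    real n * real (2 * n choose n) / 2 ^ (4 * n - 2) *
    (\<Sum>ks\<in>chains n d.
       real (2 * n - 1 choose (n - ks ! 0)) *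
       (\<Prod>i\<in>{0..d}.
          (-1) ^ (ks ! i * deltai d c i)
          / (odd_r (ks ! i) powi (2 * int (a i) - int (deltai d c i) + 3))
          * Vsharp (if i = 0 then 0 else ks ! (i - 1)) (ks ! i)
                   (replicate (cext d c i - 3) 1)))"
proof -
  have cnd: "\<forall>i\<in>{1..d}. 1 \<le> c i \<and> c i \<noteq> 2" using assms(2) by auto
  have "(\<Sum>ks\<in>chains n d.
       real (2 * n - 1 choose (n - ks ! 0)) *
       (\<Prod>i\<in>{0..d}.
          (-1) ^ (ks ! i * deltai d c i)
          / (odd_r (ks ! i) powi (2 * int (a i) - int (deltai d c i) + 3))
          * Vsharp (if i = 0 then 0 else ks ! (i - 1)) (ks ! i)
                   (replicate (cext d c i - 3) 1)))
     = (\<Sum>ks\<in>chains n d. (\<lambda>k. real (2 * n - 1 choose (n - k))) (ks!0) * prod (phi d c a ks) {0..d})"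
    unfolding phi_def by simp
  also have "\<dots> = (\<Sum>k=1..n. real (2 * n - 1 choose (n - k)) * Gd d c a k)"
    by (rule T2[OF cnd])
  finally have e: "real n * real (2 * n choose n) / 2 ^ (4 * n - 2) *
    (\<Sum>ks\<in>chains n d.
       real (2 * n - 1 choose (n - ks ! 0)) *
       (\<Prod>i\<in>{0..d}.
          (-1) ^ (ks ! i * deltai d c i)
          / (odd_r (ks ! i) powi (2 * int (a i) - int (deltai d c i) + 3))
          * Vsharp (if i = 0 then 0 else ks ! (i - 1)) (ks ! i)
                   (replicate (cext d c i - 3) 1)))
     = Bn n * (\<Sum>k=1..n. real (2 * n - 1 choose (n - k)) * Gd d c a k)"
    unfolding Bn_def by simp
  have "Bn n * (\<Sum>k=1..n. real (2 * n - 1 choose (n - k)) * Gd d c a k) = Tsum n (Gd d c a)"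
    unfolding Tsum_def sum_distrib_left by (intro sum.cong refl) (auto simp: P_def)
  also have "\<dots> = tstar n (mix_index d c a)"
    using T1[OF _ cnd] assms(1) by simp
  finally show ?thesis using e by simp
qed


end
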